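(* Let $n_x,n_y\ge1$, $n=n_x+n_y+1$, and let $\mathcal{F}\subseteq\mathbb{R}^{n_x+n_y}$ be nonempty and compact. Let $f$ be a quadratic function of $(\mathbf{x},\mathbf{y})\in\mathbb{R}^{n_x}\times\mathbb{R}^{n_y}$ and $\mathbf{Q}\in\mathcal{S}^n$ with $\mathbf{Q}\bullet\mathbf{z}\mathbf{z}^\top=f(\mathbf{x},\mathbf{y})$ for $\mathbf{z}=[1,\mathbf{x}^\top,\mathbf{y}^\top]^\top$; write $q(\mathbf{P})=\mathbf{Q}\bullet\mathbf{P}$. Let $\phi(\mathbf{x})=\inf_{\mathbf{y}}\{f(\mathbf{x},\mathbf{y}):[\mathbf{x}^\top,\mathbf{y}^\top]^\top\in\mathcal{F}\}$ (with $\inf\emptyset=+\infty$). For $\mathbf{x}\in\mathbb{R}^{n_x}$ define $$\mathcal{G}_1(\mathbf{x})=\{\mathbf{P}\in\mathcal{G}(\mathcal{F}) : \text{the }\mathbf{x}\text{-block of }\mathbf{P}\text{ equals }\mathbf{x},\ \text{the }\mathbf{X}\text{-block of }\mathbf{P}\text{ equals }\mathbf{x}\mathbf{x}^\top\},$$ $$\mathcal{G}_2(\mathbf{x})=\{\mathbf{P}\in\mathcal{G}(\mathcal{F}) : \text{the }\mathbf{x}\text{-block equals }\mathbf{x},\ \text{the }\mathbf{X}\text{-block equals }\mathbf{x}\mathbf{x}^\top,\ \text{the }\mathbf{Z}\text{-block equals }\mathbf{y}_{\mathbf{P}}\mathbf{x}^\top\},$$ where $\mathbf{y}_{\mathbf{P}}$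 is the $\mathbf{y}$-block of $\mathbf{P}$. Then $\phi(\mathbf{x})=\inf_{\mathbf{P}}\{q(\mathbf{P}):\mathbf{P}\in\mathcal{G}_j(\mathbf{x})\}$ for $j=1,2$ and all $\mathbf{x}\in\mathbb{R}^{n_x}$. Moreover $\mathcal{G}_1(\mathbf{x})=\mathcal{G}_2(\mathbf{x})$, and both sets remain unchanged if the constraint that the $\mathbf{X}$-block equals $\mathbf{x}\mathbf{x}^\top$ is relaxed to $\operatorname{diag}(\mathbf{X})=\mathbf{x}\circ\mathbf{x}$ (entrywise product).
   Context: $\mathcal{S}^n$ is the space of symmetric $n\times n$ matrices and $\mathbf{A}\bullet\mathbf{B}=\operatorname{tr}(\mathbf{A}^\top\mathbf{B})$. $\mathcal{G}(\mathcal{F})=\operatorname{cl}\operatorname{conv}\{\mathbf{z}\mathbf{z}^\top:\mathbf{z}=[1,\mathbf{x}^\top,\mathbf{y}^\top]^\top,\ [\mathbf{x}^\top,\mathbf{y}^\top]^\top\in\mathcal{F}\}$. Every $\mathbf{P}\in\mathcal{S}^n$ is partitioned as $\mathbf{P}=\begin{pmatrix}x_0&\mathbf{x}^\top&\mathbf{y}^\top\\ \mathbf{x}&\mathbf{X}&\mathbf{Z}^\top\\ \mathbf{y}&\mathbf{Z}&\mathbf{Y}\end{pmatrix}$ with $\mathbf{x}\in\mathbb{R}^{n_x}$, $\mathbf{y}\in\mathbb{R}^{n_y}$, $\mathbf{X}\in\mathcal{S}^{n_x}$, $\mathbf{Z}\in\mathbb{R}^{n_y\times n_x}$, $\mathbf{Y}\in\mathcal{S}^{n_y}$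 (these are the "blocks" referred to). The infimum over an empty set is $+\infty$. *)

theory Defs
  imports "HOL-Analysis.Analysis"
begin

text \<open>Index set of \<open>S^n\<close>, \<open>n = 1 + n_x + n_y\<close>: \<open>Inl ()\<close> is the leading index 0,
  \<open>Inr (Inl i)\<close> the x-indices, \<open>Inr (Inr j)\<close> the y-indices.\<close>
type_synonym ('x, 'y) idx = "unit + ('x + 'y)"

definition zvec :: "real^'x \<Rightarrow> real^'y \<Rightarrow> real^(('x,'y) idx)" where
  "zvec x y = (\<chi> k. case k of Inl _ \<Rightarrow> 1 | Inr (Inl i) \<Rightarrow> x $ i | Inr (Inr j) \<Rightarrow> y $ j)"

definition outer :: "real^'n \<Rightarrow> real^'n^'n" where
  "outer z = (\<chi> a b. z $ a * z $ b)"

definition frob :: "real^'n^'n \<Rightarrow> real^'n^'n \<Rightarrow> real" where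
  "frob A B = (\<Sum>a\<in>UNIV. \<Sum>b\<in>UNIV. A $ a $ b * B $ a $ b)"

definition symmetric_mat :: "real^'n^'n \<Rightarrow> bool" where
  "symmetric_mat A \<longleftrightarrow> transpose A = A"

definition GF :: "((real^'x) \<times> (real^'y)) set \<Rightarrow> (real^(('x,'y) idx)^(('x,'y) idx)) set" where
  "GF F = closure (convex hull {outer (zvec x y) | x y. (x, y) \<in> F})"

definition xblk :: "real^(('x::finite,'y::finite) idx)^(('x,'y) idx) \<Rightarrow> real^'x" where
  "xblk P = (\<chi> i. P $ Inr (Inl i) $ Inl ())"
definition yblk :: "real^(('x::finite,'y::finite) idx)^(('x,'y) idx) \<Rightarrow> real^'y" where
  "yblk P = (\<chi> j. P $ Inr (Inr j) $ Inl ())"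
definition Xblk :: "real^(('x::finite,'y::finite) idx)^(('x,'y) idx) \<Rightarrow> real^'x^'x" where
  "Xblk P = (\<chi> i i'. P $ Inr (Inl i) $ Inr (Inl i'))"
definition Zblk :: "real^(('x::finite,'y::finite) idx)^(('x,'y) idx) \<Rightarrow> real^'x^'y" where
  "Zblk P = (\<chi> j i. P $ Inr (Inr j) $ Inr (Inl i))"

definition G1 :: "((real^'x) \<times> (real^'y)) set \<Rightarrow> real^'x \<Rightarrow> (real^(('x,'y) idx)^(('x,'y) idx)) set" where
  "G1 F x = {P \<in> GF F. xblk P = x \<and> Xblk P = outer x}"

definition G2 :: "((real^'x) \<times> (real^'y)) set \<Rightarrow> real^'x \<Rightarrow> (real^(('x,'y) idx)^(('x,'y) idx)) set" where
  "G2 F x = {P \<in> GF F. xblk P = x \<and> Xblk P = outer x \<and>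
                Zblk P = (\<chi> j i. yblk P $ j * x $ i)}"

definition G1_rel :: "((real^'x) \<times> (real^'y)) set \<Rightarrow> real^'x \<Rightarrow> (real^(('x,'y) idx)^(('x,'y) idx)) set" where
  "G1_rel F x = {P \<in> GF F. xblk P = x \<and> (\<forall>i. Xblk P $ i $ i = x $ i * x $ i)}"

definition G2_rel :: "((real^'x) \<times> (real^'y)) set \<Rightarrow> real^'x \<Rightarrow> (real^(('x,'y) idx)^(('x,'y) idx)) set" where
  "G2_rel F x = {P \<in> GF F. xblk P = x \<and> (\<forall>i. Xblk P $ i $ i = x $ i * x $ i) \<and>
                Zblk P = (\<chi> j i. yblk P $ j * x $ i)}"

definition phi :: "((real^'x) \<times> (real^'y)) set \<Rightarrow> (real^'x \<Rightarrow> real^'y \<Rightarrow> real) \<Rightarrow> real^'x \<Rightarrow> ereal" where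
  "phi F f x = (INF y \<in> {y. (x, y) \<in> F}. ereal (f x y))"

end

theory Submission
  imports Defs
begin

lemma blocks:
  "xblk (outer (zvec a b)) = a" "yblk (outer (zvec a b)) = b"
  "Xblk (outer (zvec a b)) = outer a" "Zblk (outer (zvec a b)) = (\<chi> j i. b $ j * a $ i)"
  "outer (zvec a b) $ Inl () $ Inl () = 1"
  by (auto simp: vec_eq_iff xblk_def yblk_def Xblk_def Zblk_def outer_def zvec_def)

lemma convex_C:
  "convex {P::real^(('x::finite,'y::finite) idx)^(('x,'y) idx). P $ Inl () $ Inl () = 1 \<and> xblk P = x \<and> Xblk P = outer x \<and> Zblk P = (\<chi> j i. yblk P $ j * x $ i)}"
proof (rule convexI)
  fix A B :: "real^(('x,'y) idx)^(('x,'y) idx)" and u v :: real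
  assume AA: "A \<in> {P. P $ Inl () $ Inl () = 1 \<and> xblk P = x \<and> Xblk P = outer x \<and> Zblk P = (\<chi> j i. yblk P $ j * x $ i)}"
    and BB: "B \<in> {P. P $ Inl () $ Inl () = 1 \<and> xblk P = x \<and> Xblk P = outer x \<and> Zblk P = (\<chi> j i. yblk P $ j * x $ i)}"
    and uv0: "0 \<le> u" "0 \<le> v" and uv: "u + v = 1"
  have e: "\<And>c. u * c + v * c = c" using uv by (metis distrib_right mult_1)
  from AA BB have A': "A $ Inl () $ Inl () = 1" "\<And>i. A $ Inr (Inl i) $ Inl () = x $ i" "\<And>i i'. A $ Inr (Inl i) $ Inr (Inl i') = x$i * x$i'"
      "\<And>i j. A $ Inr (Inr j) $ Inr (Inl i) = A $ Inr (Inr j) $ Inl () * x$i"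
    and B': "B $ Inl () $ Inl () = 1" "\<And>i. B $ Inr (Inl i) $ Inl () = x $ i" "\<And>i i'. B $ Inr (Inl i) $ Inr (Inl i') = x$i * x$i'"
      "\<And>i j. B $ Inr (Inr j) $ Inr (Inl i) = B $ Inr (Inr j) $ Inl () * x$i"
    by (auto simp: vec_eq_iff xblk_def yblk_def Xblk_def Zblk_def outer_def)
  show "u *\<^sub>R A + v *\<^sub>R B \<in> {P. P $ Inl () $ Inl () = 1 \<and> xblk P = x \<and> Xblk P = outer x \<and> Zblk P = (\<chi> j i. yblk P $ j * x $ i)}"
    using uv by (simp add: vec_eq_iff xblk_def yblk_def Xblk_def Zblk_def outer_def A' B' e algebra_simps)
qed

lemma frob_lin: "frob Q (u *\<^sub>R A + v *\<^sub>R B) = u * frob Q A + v * frob Q B"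
  by (simp add: frob_def sum.distrib sum_distrib_left algebra_simps)

lemma convex_lb: "convex {P. \<forall>r. (\<forall>y\<in>T. r \<le> g y) \<longrightarrow> r \<le> frob Q P}"
  unfolding convex_def
proof (intro ballI allI impI, clarify)
  fix A B u v r assume uv: "0 \<le> u" "0 \<le> v" "u + v = (1::real)"
    and A: "\<forall>r. (\<forall>y\<in>T. r \<le> g y) \<longrightarrow> r \<le> frob Q A"
    and B: "\<forall>r. (\<forall>y\<in>T. r \<le> g y) \<longrightarrow> r \<le> frob Q B" and r: "\<forall>y\<in>T. r \<le> g y"
  have "u * r \<le> u * frob Q A" using A r uv by (simp add: mult_left_mono)
  moreover have "v * r \<le> v * frob Q B" using B r uv by (simp add: mult_left_mono)
  ultimately have "u * r + v * r \<le> frob Q (u *\<^sub>R A + v *\<^sub>R B)" by (simp add: frob_lin)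
  then show "r \<le> frob Q (u *\<^sub>R A + v *\<^sub>R B)" using uv by (metis distrib_right mult_1)
qed

lemma zvec_cont: "continuous_on UNIV (\<lambda>p::(real^'x::finite) \<times> (real^'y::finite). zvec (fst p) (snd p) $ k)"
proof (cases k)
  case (Inl a) then show ?thesis by (simp add: zvec_def)
next
  case (Inr b) then show ?thesis
    by (cases b) (auto simp: zvec_def intro!: continuous_intros)
qed

lemma gen_cont: "continuous_on UNIV (\<lambda>p::(real^'x::finite) \<times> (real^'y::finite). outer (zvec (fst p) (snd p)))"
  unfolding outer_def
  by (intro continuous_on_vec_lambda continuous_on_mult zvec_cont)

lemma GF_eq: assumes "compact F"
  shows "GF F = convex hull {outer (zvec x y) | x y. (x, y) \<in> F}"
proof -
  have "{outer (zvec x y) | x y. (x, y) \<in> F} = (\<lambda>p. outer (zvec (fst p) (snd p))) ` F" by force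
  then have "compact {outer (zvec x y) | x y. (x, y) \<in> F}"
    using compact_continuous_image[OF continuous_on_subset[OF gen_cont] assms] by auto
  then show ?thesis unfolding GF_def
    by (simp add: compact_convex_hull compact_imp_closed)
qed

lemma face:
  fixes h :: "'a::real_vector \<Rightarrow> real"
  assumes P: "P \<in> convex hull S" and lin: "linear h" and nn: "\<forall>v\<in>S. h v \<ge> 0" and h0: "h P = 0"
  shows "P \<in> convex hull {v\<in>S. h v = 0}"
proof -
  obtain T u where T: "finite T" "T \<subseteq> S" "\<forall>x\<in>T. 0 \<le> u x" "sum u T = 1"
    "(\<Sum>v\<in>T. u v *\<^sub>R v) = P"
    using P unfolding convex_hull_explicit by blast
  have "h P = (\<Sum>v\<in>T. u v * h v)"
    using T(5)[symmetric] by (simp add: linear_sum[OF lin] linear_scale[OF lin])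
  then have sz: "(\<Sum>v\<in>T. u v * h v) = 0" using h0 by simp
  have snn: "\<And>v. v\<in>T \<Longrightarrow> 0 \<le> u v * h v" using T(2,3) nn by auto
  have z: "\<forall>v\<in>T. u v * h v = 0" using sum_nonneg_eq_0_iff[OF T(1) snn] sz by simp
  define T' where "T' = {v\<in>T. h v = 0}"
  have fT': "finite T'" using T(1) by (simp add: T'_def)
  have sT': "T' \<subseteq> T" by (auto simp: T'_def)
  have uz: "\<forall>v\<in>T - T'. u v = 0" using z unfolding T'_def by auto
  have s1: "sum u T' = 1"
    using sum.mono_neutral_left[OF T(1) sT', of u] uz T(4) by simp
  have s2: "(\<Sum>v\<in>T'. u v *\<^sub>R v) = P"
    using sum.mono_neutral_left[OF T(1) sT', of "\<lambda>v. u v *\<^sub>R v"] uz T(5) by simp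
  have s3: "T' \<subseteq> {v\<in>S. h v = 0}" using T(2) by (auto simp: T'_def)
  have s4: "\<forall>x\<in>T'. 0 \<le> u x" using T(3) sT' by blast
  have "\<exists>S' u'. finite S' \<and> S' \<subseteq> {v\<in>S. h v = 0} \<and> (\<forall>x\<in>S'. 0 \<le> u' x) \<and> sum u' S' = 1 \<and> (\<Sum>v\<in>S'. u' v *\<^sub>R v) = P"
    using fT' s1 s2 s3 s4 by blast
  then show ?thesis unfolding convex_hull_explicit by (rule CollectI)
qed

lemma key:
  fixes F :: "((real^'x::finite) \<times> (real^'y::finite)) set"
  assumes cF: "compact F" and P: "P \<in> GF F" and xb: "xblk P = x"
    and dg: "\<forall>i. Xblk P $ i $ i = x $ i * x $ i"
  shows "P \<in> convex hull {outer (zvec x y) | y. (x, y) \<in> F}"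
proof -
  let ?S = "{outer (zvec x y) | x y. (x, y) \<in> F}"
  define h where "h = (\<lambda>P::real^(('x,'y) idx)^(('x,'y) idx).
     \<Sum>i\<in>UNIV. P $ Inr (Inl i) $ Inr (Inl i) - 2 * x$i * P $ Inr (Inl i) $ Inl () + (x$i)^2 * P $ Inl () $ Inl ())"
  have lin: "linear h"
    by (rule linearI) (simp_all add: h_def sum.distrib sum_distrib_left algebra_simps sum_subtractf)
  have hg: "h (outer (zvec a b)) = (\<Sum>i\<in>UNIV. (a$i - x$i)^2)" for a b
    by (simp add: h_def outer_def zvec_def power2_eq_square algebra_simps)
  have PS: "P \<in> convex hull ?S" using P GF_eq[OF cF] by simp
  have "convex hull ?S \<subseteq> {P. P $ Inl () $ Inl () = 1}"
    by (rule hull_minimal) (auto simp: blocks convex_def)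
  then have p00: "P $ Inl () $ Inl () = 1" using PS by auto
  have hP0: "h P = 0"
    using xb dg p00 by (simp add: h_def vec_eq_iff xblk_def Xblk_def power2_eq_square)
  have hnn: "\<forall>v\<in>?S. h v \<ge> 0" by (auto simp: hg intro!: sum_nonneg)
  have m1: "P \<in> convex hull {v\<in>?S. h v = 0}" by (rule face[OF PS lin hnn hP0])
  have m2: "{v\<in>?S. h v = 0} \<subseteq> {outer (zvec x y) | y. (x, y) \<in> F}"
  proof clarify
    fix a b assume ab: "(a, b) \<in> F" and "h (outer (zvec a b)) = 0"
    then have "(\<Sum>i\<in>UNIV. (a$i - x$i)^2) = 0" by (simp add: hg)
    then have "\<forall>i. (a$i - x$i)^2 = 0" by (simp add: sum_nonneg_eq_0_iff)
    then have "a = x" by (simp add: vec_eq_iff)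
    then show "\<exists>y. outer (zvec a b) = outer (zvec x y) \<and> (x, y) \<in> F" using ab by auto
  qed
  show ?thesis by (rule subsetD[OF hull_mono[OF m2] m1])
qed

theorem theorem3:
  fixes F :: "((real^'x) \<times> (real^'y)) set"
    and f :: "real^'x \<Rightarrow> real^'y \<Rightarrow> real"
    and Q :: "real^(('x,'y) idx)^(('x,'y) idx)"
  assumes "F \<noteq> {}" and "compact F"
    and "symmetric_mat Q"
    and "\<And>x y. frob Q (outer (zvec x y)) = f x y"
  shows "\<forall>x. phi F f x = (INF P \<in> G1 F x. ereal (frob Q P))
           \<and> phi F f x = (INF P \<in> G2 F x. ereal (frob Q P))
           \<and> G1 F x = G2 F x
           \<and> G1_rel F x = G1 F x
           \<and> G2_rel F x = G2 F x"
proof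
  fix x :: "real^'x"
  note cF = assms(2) and fq = assms(4)
  define Sx where "Sx = {outer (zvec x y) | y. (x, y) \<in> F}"
  define H where "H = convex hull Sx"
  have HGF: "H \<subseteq> GF F"
    unfolding H_def GF_eq[OF cF] Sx_def by (rule hull_mono) blast
  have "Sx \<subseteq> {P. P $ Inl () $ Inl () = 1 \<and> xblk P = x \<and> Xblk P = outer x \<and> Zblk P = (\<chi> j i. yblk P $ j * x $ i)}"
    unfolding Sx_def by (auto simp: blocks)
  then have HC: "H \<subseteq> {P. P $ Inl () $ Inl () = 1 \<and> xblk P = x \<and> Xblk P = outer x \<and> Zblk P = (\<chi> j i. yblk P $ j * x $ i)}"
    unfolding H_def by (rule hull_minimal[where S=convex, OF _ convex_C[of x]])
  have dg: "Xblk P = outer x \<Longrightarrow> Xblk P $ i $ i = x $ i * x $ i" for P i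
    by (simp add: outer_def)
  have H2: "H \<subseteq> G2 F x" using HGF HC by (auto simp: G2_def)
  have H2r: "H \<subseteq> G2_rel F x" using HGF HC dg by (auto simp: G2_rel_def)
  have H1: "H \<subseteq> G1 F x" using HGF HC by (auto simp: G1_def)
  have H1r: "G1_rel F x \<subseteq> H" unfolding H_def Sx_def
    using key[OF cF] by (auto simp: G1_rel_def)
  have r1: "G1 F x \<subseteq> G1_rel F x" using dg by (auto simp: G1_def G1_rel_def)
  have r2: "G2 F x \<subseteq> G1 F x" by (auto simp: G1_def G2_def)
  have r3: "G2_rel F x \<subseteq> G1_rel F x" by (auto simp: G2_rel_def G1_rel_def)
  have eG1: "G1 F x = H" using H1 H1r r1 by blast
  have eG2: "G2 F x = H" using H2 H1r r1 r2 by blast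
  have eG1r: "G1_rel F x = H" using H1r H1 r1 by blast
  have eG2r: "G2_rel F x = H" using H2r H1r r3 H2 r2 r1 by blast
  have pinf: "phi F f x = (INF P \<in> H. ereal (frob Q P))"
  proof (rule antisym)
    show "phi F f x \<le> (INF P \<in> H. ereal (frob Q P))"
    proof (rule INF_greatest)
      fix P assume PH: "P \<in> H"
      let ?L = "{P. \<forall>r. (\<forall>y\<in>{y. (x, y) \<in> F}. r \<le> f x y) \<longrightarrow> r \<le> frob Q P}"
      have "Sx \<subseteq> ?L" unfolding Sx_def using fq by auto
      then have "H \<subseteq> ?L" unfolding H_def by (rule hull_minimal[where S=convex, OF _ convex_lb[of "{y. (x, y) \<in> F}" "f x" Q]])
      then have PL: "\<forall>r. (\<forall>y\<in>{y. (x, y) \<in> F}. r \<le> f x y) \<longrightarrow> r \<le> frob Q P" using PH by blast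
      have "Sx \<noteq> {}" using PH unfolding H_def by auto
      then obtain y0 where y0: "(x, y0) \<in> F" unfolding Sx_def by auto
      have lb: "\<And>y. (x, y) \<in> F \<Longrightarrow> phi F f x \<le> ereal (f x y)"
        unfolding phi_def by (rule INF_lower) simp
      show "phi F f x \<le> ereal (frob Q P)"
      proof (cases "phi F f x")
        case (real r)
        then have "\<forall>y\<in>{y. (x, y) \<in> F}. r \<le> f x y" using lb by fastforce
        then show ?thesis using PL real by simp
      next
        case PInf then show ?thesis using lb[OF y0] by simp
      next
        case MInf then show ?thesis by simp
      qed
    qed
  next
    show "(INF P \<in> H. ereal (frob Q P)) \<le> phi F f x"
      unfolding phi_def
    proof (rule INF_greatest)
      fix y assume "y \<in> {y. (x, y) \<in> F}"
      then have "outer (zvec x y) \<in> H" unfolding H_def Sx_def by (intro hull_inc) blast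
      then show "(INF P \<in> H. ereal (frob Q P)) \<le> ereal (f x y)"
        using fq by (metis INF_lower)
    qed
  qed
  show "phi F f x = (INF P \<in> G1 F x. ereal (frob Q P))
           \<and> phi F f x = (INF P \<in> G2 F x. ereal (frob Q P))
           \<and> G1 F x = G2 F x
           \<and> G1_rel F x = G1 F x
           \<and> G2_rel F x = G2 F x"
    using pinf eG1 eG2 eG1r eG2r by simp
qed

end
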